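(* Let $X\ge e^{120}$, $U=\log X$ and $\widetilde W_X=[X,(1+\tfrac{2}{U})X]$. Fix any trajectory $(y_j)_{j\ge0}$ of the map $\mathcal{M}$, and let $N$ be the number of indices $j$ such that $y_j\in\widetilde W_X$ and $y_j$ is composite. Then $N\le 4$.
   Context: Let $\pi(m)$ be the number of primes $\le m$. The integer map $\mathcal{M}$ is defined by: for composite $m$, $\mathcal{M}(m)=m+\pi(m)$ (forward step of length $\pi(m)$); for a prime $p\ge 3$, $\mathcal{M}(p)=p^-$, the largest prime less than $p$ (i.e. the prime steps backward by its preceding prime gap). A trajectory is a sequence with $y_{j+1}=\mathcal{M}(y_j)$ for all $j\ge0$. *)

theory Defs
  imports "HOL-Computational_Algebra.Primes" Complex_Main
begin

definition prime_pi :: "nat \<Rightarrow> nat" where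
  "prime_pi m = card {p. prime p \<and> p \<le> m}"

definition composite :: "nat \<Rightarrow> bool" where
  "composite m \<longleftrightarrow> m > 1 \<and> \<not> prime m"

text \<open>Largest prime strictly less than p (meaningful for p >= 3).\<close>
definition prev_prime :: "nat \<Rightarrow> nat" where
  "prev_prime p = (GREATEST q. prime q \<and> q < p)"

definition M_step :: "nat \<Rightarrow> nat \<Rightarrow> bool" where
  "M_step y y' \<longleftrightarrow>
     (composite y \<and> y' = y + prime_pi y) \<or>
     (prime y \<and> y \<ge> 3 \<and> y' = prev_prime y)"

definition trajectory :: "(nat \<Rightarrow> nat) \<Rightarrow> bool" where
  "trajectory y \<longleftrightarrow> (\<forall>j. M_step (y j) (y (Suc j)))"

end

theory Submission imports Defs begin

lemma ln4_ge: "ln (4::real) \<ge> 5/4"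
proof -
  have a: "ln (3::real) \<ge> 1"
  proof -
    have "ln (exp 1) \<le> ln (3::real)" by (subst ln_le_cancel_iff) (use exp_le in auto)
    thus ?thesis by simp
  qed
  have b: "ln (3/4::real) \<le> 3/4 - 1" by (rule ln_le_minus_one) simp
  have "ln (4::real) = ln 3 - ln (3/4)" by (simp add: ln_div)
  with a b show ?thesis by linarith
qed

lemma legendre:
  fixes p :: nat
  assumes p: "prime p" and nK: "n < p ^ K"
  shows "multiplicity p (fact n :: nat) = (\<Sum>i\<in>{1..K}. n div p ^ i)"
  using nK
proof (induction n)
  case 0
  then show ?case by simp
next
  case (Suc n)
  have p1: "p > 1" using p prime_gt_1_nat by blast
  define m where "m = multiplicity p (Suc n)"
  have "p ^ m dvd Suc n" unfolding m_def by (rule multiplicity_dvd)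
  hence "p ^ m \<le> Suc n" by (rule dvd_imp_le) simp
  hence "p ^ m < p ^ K" using Suc.prems by linarith
  hence mK: "m < K" using p1 power_less_imp_less_exp by blast
  have set_eq: "{i\<in>{1..K}. p ^ i dvd Suc n} = {1..m}"
  proof safe
    fix i assume "i \<in> {1..K}" "p ^ i dvd Suc n"
    moreover have "i \<le> multiplicity p (Suc n)" by (rule multiplicity_geI) (use p1 \<open>p ^ i dvd Suc n\<close> in auto)
    ultimately show "i \<in> {1..m}" unfolding m_def by auto
  next
    fix i assume "i \<in> {1..m}"
    then show "i \<in> {1..K}" using mK by auto
    show "p ^ i dvd Suc n" using \<open>i \<in> {1..m}\<close> unfolding m_def
      by (intro multiplicity_dvd') auto
  qed
  have "(\<Sum>i\<in>{1..K}. Suc n div p ^ i) =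
        (\<Sum>i\<in>{1..K}. n div p ^ i + (if p ^ i dvd Suc n then 1 else 0))"
    by (intro sum.cong refl) (auto simp: div_Suc dvd_eq_mod_eq_0)
  also have "\<dots> = (\<Sum>i\<in>{1..K}. n div p ^ i) + card {i\<in>{1..K}. p ^ i dvd Suc n}"
    by (simp add: sum.distrib sum.If_cases Int_def)
  also have "\<dots> = multiplicity p (fact n :: nat) + m"
    using Suc by (subst set_eq) simp
  also have "\<dots> = multiplicity p (Suc n * fact n :: nat)"
    unfolding m_def
    by (subst prime_elem_multiplicity_mult_distrib) (use p in auto)
  finally show ?case by (simp add: fact_Suc)
qed

lemma binom_mult_bound:
  fixes p n :: nat
  assumes p: "prime p" and n: "n \<ge> 1"
  shows "p ^ multiplicity p (2*n choose n) \<le> 2*n"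
proof (rule ccontr)
  define m where "m = multiplicity p (2*n choose n)"
  assume "\<not> p ^ multiplicity p (2*n choose n) \<le> 2*n"
  hence big: "p ^ m > 2*n" unfolding m_def by simp
  have p1: "p > 1" using p prime_gt_1_nat by blast
  have m1: "m \<ge> 1" using big n by (cases m) auto
  define K where "K = 2*n"
  have K: "2*n < p ^ K"
  proof -
    have "2*n < 2 ^ (2*n)" by (rule less_exp)
    also have "(2::nat) ^ (2*n) \<le> p ^ (2*n)" using p1 by (intro power_mono) auto
    finally show ?thesis unfolding K_def .
  qed
  have Kn: "n < p ^ K" using K by linarith
  have "fact n * fact (2*n - n) * (2*n choose n) = (fact (2*n) :: nat)"
    by (rule binomial_fact_lemma) simp
  hence eq: "fact n * fact n * (2*n choose n) = (fact (2*n) :: nat)" by simp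
  have "multiplicity p (fact (2*n) :: nat) = multiplicity p (fact n :: nat) + multiplicity p (fact n :: nat) + m"
    unfolding eq[symmetric] m_def
    using p by (simp add: prime_elem_multiplicity_mult_distrib)
  hence S: "(\<Sum>i\<in>{1..K}. 2*n div p ^ i) = 2 * (\<Sum>i\<in>{1..K}. n div p ^ i) + m"
    using legendre[OF p K] legendre[OF p Kn] by simp
  have "(\<Sum>i\<in>{1..K}. 2*n div p ^ i) \<le> (\<Sum>i\<in>{1..K}. 2 * (n div p ^ i) + (if i < m then 1 else 0))"
  proof (intro sum_mono)
    fix i assume "i \<in> {1..K}"
    show "2*n div p ^ i \<le> 2 * (n div p ^ i) + (if i < m then 1 else 0)"
    proof (cases "i < m")
      case True
      have "2*n div p^i \<le> 2 * (n div p ^ i) + 1"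
      proof -
        define d where "d = p ^ i"
        have d0: "d > 0" unfolding d_def using p1 by simp
        have e: "n = (n div d) * d + n mod d" by simp
        have r: "n mod d < d" using d0 by simp
        have "n < (n div d) * d + d" using e r by linarith
        hence "2*n < 2*((n div d) * d) + 2*d" by linarith
        hence "2*n < (2 * (n div d) + 2) * d"
          by (simp add: algebra_simps)
        hence "2*n div d < 2 * (n div d) + 2"
          using d0 by (simp add: less_mult_imp_div_less)
        then show ?thesis unfolding d_def by simp
      qed
      then show ?thesis using True by simp
    next
      case False
      have "p ^ m \<le> p ^ i" using False p1 by (intro power_increasing) auto
      hence "2*n div p^i = 0" using big by simp
      then show ?thesis by simp
    qed
  qed
  also have "\<dots> = 2 * (\<Sum>i\<in>{1..K}. n div p ^ i) + card {i\<in>{1..K}. i < m}"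
    by (simp add: sum.distrib sum.If_cases Int_def sum_distrib_left)
  also have "card {i\<in>{1..K}. i < m} \<le> card {1..<m}"
    by (intro card_mono) auto
  finally show False using S m1 by simp
qed

lemma prime_pi_mono: "a \<le> b \<Longrightarrow> prime_pi a \<le> prime_pi b"
  unfolding prime_pi_def by (intro card_mono) (auto intro: finite_subset[of _ "{..b}"])

lemma binom_le_pow:
  fixes n :: nat assumes n: "n \<ge> 1"
  shows "(2*n choose n) \<le> (2*n) ^ prime_pi (2*n)"
proof -
  define C where "C = (2*n choose n)"
  have C0: "C \<noteq> 0" unfolding C_def by simp
  have "C = (\<Prod>p \<in> prime_factors C. p ^ multiplicity p C)"
    using prod_prime_factors[OF C0] by simp
  also have "\<dots> \<le> (\<Prod>p \<in> prime_factors C. 2*n)"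
    by (intro prod_mono) (auto simp: C_def intro!: binom_mult_bound n)
  also have "\<dots> = (2*n) ^ card (prime_factors C)" by simp
  also have "\<dots> \<le> (2*n) ^ prime_pi (2*n)"
  proof (intro power_increasing)
    show "1 \<le> 2*n" using n by simp
    have "prime_factors C \<subseteq> {p. prime p \<and> p \<le> 2*n}"
    proof
      fix p assume pC: "p \<in> prime_factors C"
      hence pp: "prime p" by auto
      have "multiplicity p C \<ge> 1" using pC
        by (simp add: prime_factors_multiplicity)
      hence "p ^ 1 \<le> p ^ multiplicity p C"
        using prime_gt_1_nat[OF pp] by (intro power_increasing) auto
      also have "\<dots> \<le> 2*n" unfolding C_def by (rule binom_mult_bound[OF pp n])
      finally show "p \<in> {p. prime p \<and> p \<le> 2*n}" using pp by simp
    qed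
    thus "card (prime_factors C) \<le> prime_pi (2*n)"
      unfolding prime_pi_def by (intro card_mono) (auto intro: finite_subset[of _ "{..2*n}"])
  qed
  finally show ?thesis unfolding C_def .
qed

lemma pi_lower:
  fixes n :: nat assumes n: "n \<ge> 1"
  shows "real (prime_pi (2*n)) * ln (real (2*n)) \<ge> real n * ln 4 - ln (real (2*n))"
proof -
  have pos: "0 < real (2*n choose n)" by simp
  have "4^n / (2*real n) \<le> real (2*n choose n)"
    using central_binomial_lower_bound n by simp
  hence "ln (4^n / (2*real n)) \<le> ln (real (2*n choose n))"
    using n by (subst ln_le_cancel_iff) auto
  moreover have "ln (4^n / (2*real n)) = n * ln 4 - ln (2*n)"
    using n by (simp add: ln_div ln_realpow)
  moreover have "ln (real (2*n choose n)) \<le> ln (real ((2*n) ^ prime_pi (2*n)))"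
  proof -
    have le: "real (2*n choose n) \<le> real ((2*n) ^ prime_pi (2*n))"
      by (simp only: of_nat_le_iff) (rule binom_le_pow[OF n])
    show ?thesis by (rule ln_mono[OF le pos])
  qed
  moreover have "ln (real ((2*n) ^ prime_pi (2*n))) = real (prime_pi (2*n)) * ln (real (2*n))"
    by (simp only: of_nat_power ln_realpow)
  ultimately show ?thesis by linarith
qed

lemma real_bound:
  fixes X :: real assumes X: "X \<ge> 3000"
  defines "n \<equiv> nat \<lfloor>X/2\<rfloor>"
  shows "2 * real (prime_pi (2*n)) * ln X > X" and "real (2*n) \<le> X"
proof -
  have fl: "real_of_int \<lfloor>X/2\<rfloor> \<le> X/2" "X/2 < real_of_int \<lfloor>X/2\<rfloor> + 1"
    by linarith+
  have fl0: "\<lfloor>X/2\<rfloor> \<ge> 0" using X by simp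
  have rn: "real n = real_of_int \<lfloor>X/2\<rfloor>" unfolding n_def using fl0 by simp
  have x1: "real (2*n) \<le> X" using rn fl by simp
  have x2: "real (2*n) > X - 2" using rn fl by linarith
  show "real (2*n) \<le> X" by (rule x1)
  have n1: "n \<ge> 1" using x2 X by simp
  have xpos: "real (2*n) > 0" using n1 by simp
  have lnx: "ln (real (2*n)) \<le> ln X" using x1 xpos by simp
  have lnxpos: "ln (real (2*n)) \<ge> 0" using n1 by simp
  have pi0: "real (prime_pi (2*n)) \<ge> 0" by simp
  have A: "real (prime_pi (2*n)) * ln (real (2*n)) \<ge> real n * ln 4 - ln (real (2*n))"
    by (rule pi_lower[OF n1])
  have B: "real (prime_pi (2*n)) * ln X \<ge> real (prime_pi (2*n)) * ln (real (2*n))"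
    by (rule mult_left_mono[OF lnx pi0])
  have C: "real n * ln 4 \<ge> real n * (5/4)"
    by (rule mult_left_mono[OF ln4_ge]) simp
  have l16: "ln (X/16) \<le> X/16 - 1" by (rule ln_le_minus_one) (use X in simp)
  have l16b: "ln (16::real) \<le> 16 - 1" by (rule ln_le_minus_one) simp
  have "ln (X/16) = ln X - ln 16" using X by (simp add: ln_div)
  hence lnX: "ln X \<le> X/16 + 14" using l16 l16b by linarith
  show "2 * real (prime_pi (2*n)) * ln X > X"
  proof -
    have D: "real (prime_pi (2*n)) * ln X \<ge> real n * (5/4) - ln X"
      using A B C lnx by linarith
    have E: "2 * real (prime_pi (2*n)) * ln X = 2 * (real (prime_pi (2*n)) * ln X)" by simp
    have F: "real (2*n) = 2 * real n" by simp
    show ?thesis using D E F lnX x2 X by linarith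
  qed
qed

lemma prev_prime_props:
  assumes "prime q" "q \<ge> 3"
  shows "prime (prev_prime q) \<and> prev_prime q < q"
proof -
  have "(\<lambda>r. prime r \<and> r < q) (GREATEST r. prime r \<and> r < q)"
    by (rule GreatestI_nat[of _ 2 q]) (use assms in auto)
  thus ?thesis unfolding prev_prime_def by simp
qed

lemma traj_no_prime:
  assumes T: "trajectory y"
  shows "\<not> prime (y j)"
proof
  assume pj: "prime (y j)"
  have "prime (y (j+k)) \<and> y (j+k) + k \<le> y j" for k
  proof (induction k)
    case 0 then show ?case using pj by simp
  next
    case (Suc k)
    have st: "M_step (y (j+k)) (y (Suc (j+k)))" using T unfolding trajectory_def by blast
    have "\<not> composite (y (j+k))" using Suc unfolding composite_def by simp
    hence "prime (y (j+k)) \<and> y (j+k) \<ge> 3 \<and> y (Suc (j+k)) = prev_prime (y (j+k))"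
      using st unfolding M_step_def by blast
    hence "prime (y (Suc (j+k))) \<and> y (Suc (j+k)) < y (j+k)"
      using prev_prime_props by metis
    then show ?case using Suc by simp
  qed
  from this[of "Suc (y j)"] show False by simp
qed

lemma pi_pos: "m \<ge> 2 \<Longrightarrow> prime_pi m \<ge> 1"
proof -
  assume "m \<ge> 2"
  hence "2 \<in> {p. prime p \<and> p \<le> m}" by simp
  moreover have "finite {p. prime p \<and> p \<le> m}" by (rule finite_subset[of _ "{..m}"]) auto
  ultimately have "card {p. prime p \<and> p \<le> m} \<noteq> 0" by (metis card_0_eq empty_iff)
  thus ?thesis unfolding prime_pi_def by linarith
qed

lemma traj_comp:
  assumes T: "trajectory y"
  shows "composite (y j) \<and> y (Suc j) = y j + prime_pi (y j)"
  using T traj_no_prime[OF T, of j] unfolding trajectory_def M_step_def by blast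

lemma traj_growth:
  assumes T: "trajectory y" and a: "n0 \<le> y j"
  shows "y (j + k) \<ge> y j + k * prime_pi n0"
proof (induction k)
  case 0 then show ?case by simp
next
  case (Suc k)
  have "prime_pi n0 \<le> prime_pi (y (j+k))" using Suc a by (intro prime_pi_mono) simp
  then show ?case using Suc traj_comp[OF T, of "j+k"] by simp
qed

theorem lemma3p3:
  fixes X :: real and y :: "nat \<Rightarrow> nat"
  assumes "X \<ge> exp 120"
    and "trajectory y"
  shows "let U = ln X;
             W = {X .. (1 + 2 / U) * X};
             S = {j. real (y j) \<in> W \<and> composite (y j)}
         in finite S \<and> card S \<le> 4"
proof -
  note T = assms(2)
  have "exp (120::real) = exp 60 * exp 60" by (simp flip: exp_add)
  moreover have "exp (60::real) \<ge> 61" using exp_ge_add_one_self[of 60] by simp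
  ultimately have "exp (120::real) \<ge> 61 * 61"
    by (simp only:) (rule mult_mono, simp_all)
  hence X: "X \<ge> 3000" using assms(1) by simp
  define n where "n = nat \<lfloor>X/2\<rfloor>"
  define n0 where "n0 = 2*n"
  have big: "2 * real (prime_pi n0) * ln X > X" and n0X: "real n0 \<le> X"
    using real_bound[OF X] unfolding n0_def n_def by auto
  have L: "ln X > 0" using X by simp
  define B where "B = (1 + 2 / ln X) * X"
  define S where "S = {j. real (y j) \<in> {X..B} \<and> composite (y j)}"
  have step: "y j < y (Suc j)" for j
  proof -
    have "composite (y j)" and e: "y (Suc j) = y j + prime_pi (y j)"
      using traj_comp[OF T] by auto
    hence "y j \<ge> 2" unfolding composite_def by simp
    hence "prime_pi (y j) \<ge> 1" by (rule pi_pos)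
    thus ?thesis using e by simp
  qed
  have sm: "strict_mono y" using step by (simp add: strict_mono_Suc_iff)
  have fin: "finite S"
  proof (rule finite_subset[of _ "{..nat \<lceil>B\<rceil>}"])
    show "S \<subseteq> {..nat \<lceil>B\<rceil>}"
    proof
      fix j assume "j \<in> S"
      hence "real (y j) \<le> B" unfolding S_def by simp
      hence "y j \<le> nat \<lceil>B\<rceil>" by linarith
      moreover have "j \<le> y j" by (rule strict_mono_imp_increasing[OF sm])
      ultimately show "j \<in> {..nat \<lceil>B\<rceil>}" by simp
    qed
  qed simp
  have card: "card S \<le> 4"
  proof (rule ccontr)
    assume "\<not> card S \<le> 4"
    hence c5: "card S \<ge> 5" by simp
    hence ne: "S \<noteq> {}" by auto
    define a where "a = Min S"
    have aS: "a \<in> S" unfolding a_def using fin ne by simp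
    have amin: "\<forall>b\<in>S. a \<le> b" unfolding a_def using fin by simp
    have "\<exists>b\<in>S. b \<ge> a + 4"
    proof (rule ccontr)
      assume "\<not> (\<exists>b\<in>S. b \<ge> a + 4)"
      hence "S \<subseteq> {a..<a+4}" using amin by fastforce
      hence "card S \<le> card {a..<a+4}" by (intro card_mono) auto
      thus False using c5 by simp
    qed
    then obtain b where bS: "b \<in> S" and ab: "b \<ge> a + 4" by blast
    have ya: "real (y a) \<ge> X" using aS unfolding S_def by simp
    hence "n0 \<le> y a" using n0X by linarith
    hence g: "y (a + 4) \<ge> y a + 4 * prime_pi n0" using traj_growth[OF T] by blast
    have "y b \<ge> y (a + 4)" using ab sm by (simp add: strict_mono_less_eq)
    hence "real (y b) \<ge> real (y a) + 4 * real (prime_pi n0)" using g by linarith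
    moreover have "real (y b) \<le> B" using bS unfolding S_def by simp
    moreover have "B = X + 2 * X / ln X" unfolding B_def by (simp add: algebra_simps)
    ultimately have "4 * real (prime_pi n0) \<le> 2 * X / ln X" using ya by linarith
    hence "4 * real (prime_pi n0) * ln X \<le> 2 * X" using L by (simp add: pos_le_divide_eq)
    thus False using big by linarith
  qed
  show ?thesis using fin card by (simp add: Let_def S_def B_def)
qed

end
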